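(* Let $c,d\in\mathbb{R}$ with $d\neq0$ be given. Then $\mathcal{S}[\mu,\lambda]=\mathcal{S}^*[\mu,\lambda]$ for all $\mu,\lambda>0$.
   Context: Impulse time sequences are strictly increasing sequences $\{t_k\}$ in $(t_0,\infty)$, finite or infinite and unbounded, with no finite accumulation point. For $t\ge s\ge t_0$, $N(t,s)$ denotes the number of impulse times in the half-open interval $(s,t]$ and $N^*(t,s)$ the number of impulse times in the closed interval $[s,t]$. $\mathcal{S}[\mu,\lambda]$ is the class of impulse time sequences satisfying $-dN(t,s)-(c-\lambda)(t-s)\le\mu$ for all $t\ge s\ge t_0$, and $\mathcal{S}^*[\mu,\lambda]$ is the class of impulse time sequences satisfying $-dN^*(t,s)-(c-\lambda)(t-s)\le\mu$ for all $t\ge s\ge t_0$. *)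

theory Defs
  imports "HOL-Analysis.Analysis" "HOL-Library.Extended_Nat"
begin

text \<open>An impulse time sequence in (t0, infinity) is given by its length
  n (finite, or \<infinity> for an infinite sequence) and the terms t k for
  enat k < n.  It is strictly increasing, lies in (t0, infinity), and if it is
  infinite it is unbounded (equivalently, for a strictly increasing sequence,
  it has no finite accumulation point).\<close>
definition impulse_seq :: "real \<Rightarrow> enat \<Rightarrow> (nat \<Rightarrow> real) \<Rightarrow> bool" where
  "impulse_seq t0 n t \<longleftrightarrow>
     (\<forall>i j. i < j \<and> enat j < n \<longrightarrow> t i < t j) \<and>
     (\<forall>k. enat k < n \<longrightarrow> t0 < t k) \<and>
     (n = \<infinity> \<longrightarrow> filterlim t at_top sequentially)"

definition N_count :: "enat \<Rightarrow> (nat \<Rightarrow> real) \<Rightarrow> real \<Rightarrow> real \<Rightarrow> nat" where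
  "N_count n t b a = card {k. enat k < n \<and> a < t k \<and> t k \<le> b}"

definition N_star_count :: "enat \<Rightarrow> (nat \<Rightarrow> real) \<Rightarrow> real \<Rightarrow> real \<Rightarrow> nat" where
  "N_star_count n t b a = card {k. enat k < n \<and> a \<le> t k \<and> t k \<le> b}"

definition S_class :: "real \<Rightarrow> real \<Rightarrow> real \<Rightarrow> real \<Rightarrow> real \<Rightarrow> (enat \<times> (nat \<Rightarrow> real)) set" where
  "S_class c d t0 mu lam = {(n, t). impulse_seq t0 n t \<and>
     (\<forall>s b. t0 \<le> s \<and> s \<le> b \<longrightarrow>
        - d * real (N_count n t b s) - (c - lam) * (b - s) \<le> mu)}"

definition S_star_class :: "real \<Rightarrow> real \<Rightarrow> real \<Rightarrow> real \<Rightarrow> real \<Rightarrow> (enat \<times> (nat \<Rightarrow> real)) set" where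
  "S_star_class c d t0 mu lam = {(n, t). impulse_seq t0 n t \<and>
     (\<forall>s b. t0 \<le> s \<and> s \<le> b \<longrightarrow>
        - d * real (N_star_count n t b s) - (c - lam) * (b - s) \<le> mu)}"

end

theory Submission
  imports Defs
begin

lemma fin_le:
  assumes "impulse_seq t0 n t"
  shows "finite {k. enat k < n \<and> t k \<le> B}"
proof (cases n)
  case (enat m)
  then have "{k. enat k < n \<and> t k \<le> B} \<subseteq> {..<m}" by auto
  then show ?thesis by (rule finite_subset) simp
next
  case infinity
  with assms have "filterlim t at_top sequentially" unfolding impulse_seq_def by auto
  then have "eventually (\<lambda>k. B + 1 \<le> t k) sequentially" by (simp add: filterlim_at_top)
  then obtain N0 where N0: "\<And>k. k \<ge> N0 \<Longrightarrow> B + 1 \<le> t k" by (auto simp: eventually_sequentially)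
  have "k < N0" if "t k \<le> B" for k
  proof (rule ccontr)
    assume "\<not> k < N0"
    then have "B + 1 \<le> t k" using N0 by simp
    with that show False by linarith
  qed
  then have "{k. enat k < n \<and> t k \<le> B} \<subseteq> {..<N0}" by auto
  then show ?thesis by (rule finite_subset) auto
qed

lemma fin_sub:
  assumes "impulse_seq t0 n t" "\<And>k. P k \<Longrightarrow> t k \<le> B"
  shows "finite {k. enat k < n \<and> P k}"
  by (rule finite_subset[OF _ fin_le[OF assms(1), of B]]) (use assms(2) in blast)

lemma eps_arg:
  fixes E mu C :: real
  assumes "\<And>e. e > 0 \<Longrightarrow> E \<le> mu + C * e" "C \<ge> 0"
  shows "E \<le> mu"
proof (rule field_le_epsilon)
  fix e :: real assume e: "0 < e"
  have p: "e / (C + 1) > 0" using e assms(2) by auto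
  have "C * (e / (C + 1)) \<le> e" using e assms(2) by (simp add: field_simps)
  then show "E \<le> mu + e" using assms(1)[OF p] by linarith
qed

lemma N_le_Nstar:
  assumes "impulse_seq t0 n t"
  shows "N_count n t b s \<le> N_star_count n t b s"
  unfolding N_count_def N_star_count_def
  by (rule card_mono[OF fin_sub[OF assms, of _ b]]) auto


lemma A1:
  fixes c d t0 mu lam :: real
  assumes dpos: "d > 0" and imp: "impulse_seq t0 n t"
    and H: "\<forall>s b. t0 \<le> s \<and> s \<le> b \<longrightarrow> - d * real (N_count n t b s) - (c - lam) * (b - s) \<le> mu"
  shows "\<forall>s b. t0 \<le> s \<and> s \<le> b \<longrightarrow> - d * real (N_star_count n t b s) - (c - lam) * (b - s) \<le> mu"
proof (intro allI impI)
  fix s b assume sb: "t0 \<le> s \<and> s \<le> b"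
  have "d * real (N_count n t b s) \<le> d * real (N_star_count n t b s)"
    using N_le_Nstar[OF imp] dpos by simp
  then show "- d * real (N_star_count n t b s) - (c - lam) * (b - s) \<le> mu"
    using H sb by force
qed

lemma A2:
  fixes c d t0 mu lam :: real
  assumes dneg': "d < 0" and imp: "impulse_seq t0 n t"
    and H: "\<forall>s b. t0 \<le> s \<and> s \<le> b \<longrightarrow> - d * real (N_star_count n t b s) - (c - lam) * (b - s) \<le> mu"
  shows "\<forall>s b. t0 \<le> s \<and> s \<le> b \<longrightarrow> - d * real (N_count n t b s) - (c - lam) * (b - s) \<le> mu"
proof (intro allI impI)
  fix s b assume sb: "t0 \<le> s \<and> s \<le> b"
  have "d * real (N_star_count n t b s) \<le> d * real (N_count n t b s)"
    using N_le_Nstar[OF imp, of b s] dneg' by (simp add: mult_le_cancel_left)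
  then show "- d * real (N_count n t b s) - (c - lam) * (b - s) \<le> mu"
    using H sb by force
qed

lemma B1:
  fixes c d t0 mu lam :: real
  assumes mpos: "mu > 0" and imp: "impulse_seq t0 n t"
    and H: "\<forall>s b. t0 \<le> s \<and> s \<le> b \<longrightarrow> - d * real (N_star_count n t b s) - (c - lam) * (b - s) \<le> mu"
  shows "\<forall>s b. t0 \<le> s \<and> s \<le> b \<longrightarrow> - d * real (N_count n t b s) - (c - lam) * (b - s) \<le> mu"
proof (intro allI impI)
  fix s b assume sb': "t0 \<le> s \<and> s \<le> b"
  then have sb: "t0 \<le> s" "s \<le> b" by auto
  show "- d * real (N_count n t b s) - (c - lam) * (b - s) \<le> mu"
  proof (cases "s = b")
    case True
    then have "{k. enat k < n \<and> s < t k \<and> t k \<le> b} = {}" by auto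
    then have "N_count n t b s = card ({}::nat set)" unfolding N_count_def by (rule arg_cong)
    then have "N_count n t b s = 0" by simp
    then show ?thesis using True mpos by simp
  next
    case False
    with sb have slb: "s < b" by auto
    show ?thesis
    proof (rule eps_arg[where C = "\<bar>c - lam\<bar>"])
      fix e :: real assume e: "e > 0"
      define T where "T = t ` {k. enat k < n \<and> s < t k \<and> t k \<le> b}"
      have fT: "finite T" unfolding T_def by (rule finite_imageI, rule fin_sub[OF imp]) auto
      define s' where "s' = Min ({b, s + e} \<union> T)"
      have fA: "finite ({b, s + e} \<union> T)" using fT by auto
      have s'gt: "s' > s" unfolding s'_def using fA slb e
        by (subst Min_gr_iff) (auto simp: T_def)
      have s'le: "s' \<le> b" "s' \<le> s + e" unfolding s'_def using fA by (intro Min_le; simp)+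
      have eqset: "{k. enat k < n \<and> s' \<le> t k \<and> t k \<le> b} = {k. enat k < n \<and> s < t k \<and> t k \<le> b}"
      proof -
        have "s' \<le> t k" if "enat k < n" "s < t k" "t k \<le> b" for k
          unfolding s'_def using fA that by (intro Min_le) (auto simp: T_def)
        then show ?thesis using s'gt by force
      qed
      have "N_count n t b s = N_star_count n t b s'"
        unfolding N_count_def N_star_count_def using eqset by simp
      moreover have "- d * real (N_star_count n t b s') - (c - lam) * (b - s') \<le> mu"
        using H sb s'gt s'le by force
      moreover have "- (c - lam) * (s' - s) \<le> \<bar>c - lam\<bar> * e"
      proof -
        have "- (c - lam) * (s' - s) \<le> \<bar>c - lam\<bar> * (s' - s)"
          using s'gt by (intro mult_right_mono) auto
        also have "\<dots> \<le> \<bar>c - lam\<bar> * e" using s'le by (intro mult_left_mono) auto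
        finally show ?thesis .
      qed
      ultimately show "- d * real (N_count n t b s) - (c - lam) * (b - s) \<le> mu + \<bar>c - lam\<bar> * e"
        by (simp add: algebra_simps)
    qed simp
  qed
qed

lemma B2:
  fixes c d t0 mu lam :: real
  assumes imp: "impulse_seq t0 n t"
    and H: "\<forall>s b. t0 \<le> s \<and> s \<le> b \<longrightarrow> - d * real (N_count n t b s) - (c - lam) * (b - s) \<le> mu"
  shows "\<forall>s b. t0 \<le> s \<and> s \<le> b \<longrightarrow> - d * real (N_star_count n t b s) - (c - lam) * (b - s) \<le> mu"
proof (intro allI impI)
  fix s b assume sb': "t0 \<le> s \<and> s \<le> b"
  then have sb: "t0 \<le> s" "s \<le> b" by auto
  have pos: "\<And>k. enat k < n \<Longrightarrow> t0 < t k" using imp unfolding impulse_seq_def by auto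
  show "- d * real (N_star_count n t b s) - (c - lam) * (b - s) \<le> mu"
  proof (rule eps_arg[where C = "\<bar>c - lam\<bar>"])
    fix e :: real assume e: "e > 0"
    define T where "T = t ` {k. enat k < n \<and> t k < s}"
    have fT: "finite T" unfolding T_def by (rule finite_imageI, rule fin_sub[OF imp, of _ s]) auto
    define s' where "s' = Max ({t0, s - e} \<union> T)"
    have fA: "finite ({t0, s - e} \<union> T)" using fT by auto
    have s'ge: "s' \<ge> t0" "s' \<ge> s - e" unfolding s'_def using fA by (intro Max_ge; simp)+
    have s'le: "s' \<le> s" unfolding s'_def using fA sb e
      by (subst Max_le_iff) (auto simp: T_def)
    have eqset: "{k. enat k < n \<and> s' < t k \<and> t k \<le> b} = {k. enat k < n \<and> s \<le> t k \<and> t k \<le> b}"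
    proof -
      have "s' < t k" if "enat k < n" "s \<le> t k" for k
        unfolding s'_def using fA that e pos[OF that(1)]
        by (subst Max_less_iff) (auto simp: T_def)
      moreover have "s \<le> t k" if "enat k < n" "s' < t k" for k
      proof (rule ccontr)
        assume "\<not> s \<le> t k"
        then have "t k \<in> T" using that by (auto simp: T_def)
        then have "t k \<le> s'" unfolding s'_def using fA by (intro Max_ge) auto
        then show False using that by auto
      qed
      ultimately show ?thesis by force
    qed
    have "N_star_count n t b s = N_count n t b s'"
      unfolding N_count_def N_star_count_def using eqset by simp
    moreover have "- d * real (N_count n t b s') - (c - lam) * (b - s') \<le> mu"
      using H sb s'ge s'le by force
    moreover have "(c - lam) * (s - s') \<le> \<bar>c - lam\<bar> * e"
    proof -
      have "(c - lam) * (s - s') \<le> \<bar>c - lam\<bar> * (s - s')"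
        using s'le by (intro mult_right_mono) auto
      also have "\<dots> \<le> \<bar>c - lam\<bar> * e" using s'ge by (intro mult_left_mono) auto
      finally show ?thesis .
    qed
    ultimately show "- d * real (N_star_count n t b s) - (c - lam) * (b - s) \<le> mu + \<bar>c - lam\<bar> * e"
      by (simp add: algebra_simps)
  qed simp
qed

lemma memS: "(n, t) \<in> S_class c d t0 mu lam \<longleftrightarrow> impulse_seq t0 n t \<and>
     (\<forall>s b. t0 \<le> s \<and> s \<le> b \<longrightarrow>
        - d * real (N_count n t b s) - (c - lam) * (b - s) \<le> mu)"
  unfolding S_class_def by simp

lemma memSS: "(n, t) \<in> S_star_class c d t0 mu lam \<longleftrightarrow> impulse_seq t0 n t \<and>
     (\<forall>s b. t0 \<le> s \<and> s \<le> b \<longrightarrow>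
        - d * real (N_star_count n t b s) - (c - lam) * (b - s) \<le> mu)"
  unfolding S_star_class_def by simp

theorem lemma2:
  fixes c d t0 :: real
  assumes "d \<noteq> 0"
  shows "\<forall>mu lam. mu > 0 \<and> lam > 0 \<longrightarrow> S_class c d t0 mu lam = S_star_class c d t0 mu lam"
proof (intro allI impI)
  fix mu lam :: real assume ml: "mu > 0 \<and> lam > 0"
  show "S_class c d t0 mu lam = S_star_class c d t0 mu lam"
  proof (rule set_eqI)
    fix x :: "enat \<times> (nat \<Rightarrow> real)"
    obtain n t where x: "x = (n, t)" by (cases x)
    show "x \<in> S_class c d t0 mu lam \<longleftrightarrow> x \<in> S_star_class c d t0 mu lam"
    proof (cases "d > 0")
      case True
      show ?thesis unfolding x memS memSS
        using A1[OF True, of t0 n t c lam mu] B1[OF conjunct1[OF ml], of t0 n t d c lam] by blast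
    next
      case False
      with assms have dn: "d < 0" by auto
      show ?thesis unfolding x memS memSS
        using A2[OF dn, of t0 n t c lam mu] B2[of t0 n t d c lam mu] by blast
    qed
  qed
qed

end
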